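(* Assume $s>d$, and let $R^*$ have the distribution of $R$, independent of $X^{(n)}$. Then $$\lim_{n\to\infty}\mathbb{P}\big(o\text{ is isolated in }G(X^{(n)}\cup\{(o,R^* )\})\big)>0.$$
   Context: Fix an integer $d\ge2$. For $n\ge1$, $\mathbb{T}_n$ is the torus obtained from $[-n/2,n/2]^d$ by identifying opposite faces, with toroidal distance ${\rm d}_{\mathbb{T}_n}$, origin $o$, and $B^{\mathbb{T}_n}_r(\xi)=\{\eta\in\mathbb{T}_n:{\rm d}_{\mathbb{T}_n}(\xi,\eta)\le r\}$. $R$ is a nonnegative random variable with absolutely continuous distribution such that $\lim_{h\to\infty}h^s\mathbb{P}(R>h)=\beta$ for some $\beta,s\in(0,\infty)$. $X^{(n)}$ is a homogeneous Poisson point process of intensity $1$ on $\mathbb{T}_n$, each point independently marked with a mark in $[0,\infty)$ distributed as $R$ (points written $(\xi,r)$). For a finite set $\varphi\subset\mathbb{T}_n\times[0,\infty)$, $G(\varphi)$ is the graph on $\varphi$ with a directed edge from $(\xi,r)$ to $(\eta,t)$ whenever $\eta\in B^{\mathbb{T}_n}_r(\xi)$. "$o$ is isolated" means the vertex $(o,R^* )$ has no incoming and no outgoing edges. *)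

theory Defs
  imports "HOL-Probability.Probability"
begin

text \<open>The torus T_n is represented by the fundamental domain [-n/2,n/2)^d of real^'d,
  where the finite type 'd has CARD('d) = d elements.\<close>

definition torus_box :: "nat \<Rightarrow> (real^'d) set" where
  "torus_box n = {x. \<forall>i. - real n / 2 \<le> x $ i \<and> x $ i < real n / 2}"

definition circ_dist :: "nat \<Rightarrow> real \<Rightarrow> real \<Rightarrow> real" where
  "circ_dist n a b = Inf {\<bar>a - b - of_int k * real n\<bar> | k. True}"

definition torus_dist :: "nat \<Rightarrow> real^'d \<Rightarrow> real^'d \<Rightarrow> real" where
  "torus_dist n x y = sqrt (\<Sum>i\<in>UNIV. (circ_dist n (x $ i) (y $ i))^2)"

definition edge :: "nat \<Rightarrow> ((real^'d) \<times> real) set \<Rightarrow> ((real^'d) \<times> real) \<Rightarrow> ((real^'d) \<times> real) \<Rightarrow> bool" where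
  "edge n \<phi> v w \<longleftrightarrow> v \<in> \<phi> \<and> w \<in> \<phi> \<and> v \<noteq> w \<and> torus_dist n (fst v) (fst w) \<le> snd v"

definition isolated :: "nat \<Rightarrow> ((real^'d) \<times> real) set \<Rightarrow> ((real^'d) \<times> real) \<Rightarrow> bool" where
  "isolated n \<phi> v \<longleftrightarrow> v \<in> \<phi> \<and> (\<forall>w. \<not> edge n \<phi> v w \<and> \<not> edge n \<phi> w v)"

definition marked_point :: "nat \<Rightarrow> real measure \<Rightarrow> ((real^'d) \<times> real) measure" where
  "marked_point n \<mu> = uniform_measure lborel (torus_box n) \<Otimes>\<^sub>M \<mu>"

text \<open>Probability that the independently marked homogeneous Poisson process of intensity 1
  on T_n (volume n^d) has a configuration in the event E: a Poisson(n^d) number of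
  i.i.d. marked points.\<close>
definition ppp_prob :: "'d::finite itself \<Rightarrow> nat \<Rightarrow> real measure \<Rightarrow> (((real^'d) \<times> real) set \<Rightarrow> bool) \<Rightarrow> real" where
  "ppp_prob _ n \<mu> E =
     (\<Sum>k. exp (- (real n ^ CARD('d))) * (real n ^ CARD('d)) ^ k / fact k *
        measure (PiM {..<k} (\<lambda>_. marked_point n \<mu> :: ((real^'d) \<times> real) measure))
          {f \<in> space (PiM {..<k} (\<lambda>_. marked_point n \<mu> :: ((real^'d) \<times> real) measure)).
             E (f ` {..<k})})"

definition iso_prob :: "'d::finite itself \<Rightarrow> nat \<Rightarrow> real measure \<Rightarrow> real" where
  "iso_prob d n \<mu> =
     (\<integral>r. ppp_prob d n \<mu> (\<lambda>\<phi>. isolated n (\<phi> \<union> {(0 :: real^'d, r)}) (0, r)) \<partial>\<mu>)"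

end

theory Submission
  imports Defs "HOL-Analysis.Ball_Volume"
begin


lemma measurable_round[measurable]: "(round :: real \<Rightarrow> int) \<in> borel \<rightarrow>\<^sub>M count_space UNIV"
  unfolding round_def by measurable

lemma circ_min:
  assumes n: "(c::real) > 0"
  shows "\<bar>z - of_int (round (z/c)) * c\<bar> \<le> \<bar>z - of_int k * c\<bar>"
proof -
  define w where "w = z / c"
  have z: "z = w * c" using n by (simp add: w_def)
  have h: "\<bar>of_int (round w) - w\<bar> \<le> 1/2" by (rule of_int_round_abs_le)
  have "\<bar>w - of_int (round w)\<bar> \<le> \<bar>w - of_int k\<bar>"
  proof (cases "k = round w")
    case False
    hence i: "1 \<le> \<bar>k - round w\<bar>" by (cases "k < round w") auto
    have "(1::real) \<le> of_int \<bar>k - round w\<bar>" using i by (simp only: of_int_1_le_iff)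
    hence "\<bar>of_int k - of_int (round w)\<bar> \<ge> (1::real)" by simp
    thus ?thesis using h by linarith
  qed simp
  hence "\<bar>w - of_int (round w)\<bar> * c \<le> \<bar>w - of_int k\<bar> * c" using n by (simp add: mult_right_mono)
  thus ?thesis using n by (simp add: z abs_mult_pos' left_diff_distrib[symmetric] abs_mult)
qed

lemma circ_dist_closed:
  assumes "n > 0"
  shows "circ_dist n a b = \<bar>(a - b) - of_int (round ((a - b) / real n)) * real n\<bar>"
  unfolding circ_dist_def
  by (rule cInf_eq_minimum) (use circ_min[of "real n" "a - b"] assms in auto)

lemma circ_box_aux:
  assumes "n > 0" "\<bar>a\<bar> \<le> real n / 2"
  shows "\<bar>a\<bar> \<le> \<bar>a - of_int k * real n\<bar>"
proof (cases "k = 0")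
  case False
  hence i: "1 \<le> \<bar>k\<bar>" by (cases "k < 0") auto
  have "(1::real) \<le> of_int \<bar>k\<bar>" using i by (simp only: of_int_1_le_iff)
  hence "1 * real n \<le> \<bar>of_int k\<bar> * real n" by (intro mult_right_mono) auto
  hence "real n \<le> \<bar>of_int k * real n\<bar>" by (simp add: abs_mult)
  thus ?thesis using assms by linarith
qed simp

lemma circ_dist_box:
  assumes "n > 0" "\<bar>a\<bar> \<le> real n / 2"
  shows "circ_dist n 0 a = \<bar>a\<bar>" "circ_dist n a 0 = \<bar>a\<bar>"
proof -
  have l1: "\<bar>a\<bar> \<le> \<bar>0 - a - of_int k * real n\<bar>" for k
  proof -
    have "\<bar>a\<bar> \<le> \<bar>a - of_int (- k) * real n\<bar>" by (rule circ_box_aux[OF assms])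
    also have "\<dots> = \<bar>0 - a - of_int k * real n\<bar>" by simp
    finally show ?thesis .
  qed
  have m1: "\<bar>a\<bar> \<in> {\<bar>0 - a - of_int k * real n\<bar> | k. True}"
    by (rule CollectI, rule exI[of _ 0]) simp
  show "circ_dist n 0 a = \<bar>a\<bar>" unfolding circ_dist_def
    by (rule cInf_eq_minimum[OF m1]) (use l1 in blast)
  have l2: "\<bar>a\<bar> \<le> \<bar>a - 0 - of_int k * real n\<bar>" for k
    using circ_box_aux[OF assms, of k] by simp
  have m2: "\<bar>a\<bar> \<in> {\<bar>a - 0 - of_int k * real n\<bar> | k. True}"
    by (rule CollectI, rule exI[of _ 0]) simp
  show "circ_dist n a 0 = \<bar>a\<bar>" unfolding circ_dist_def
    by (rule cInf_eq_minimum[OF m2]) (use l2 in blast)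
qed

lemma torus_dist_box:
  fixes x :: "real^'d"
  assumes "n > 0" "x \<in> torus_box n"
  shows "torus_dist n 0 x = norm x" "torus_dist n x 0 = norm x"
proof -
  have a: "\<bar>x$i\<bar> \<le> real n / 2" for i
  proof -
    have "- real n / 2 \<le> x $ i \<and> x $ i < real n / 2" using assms(2) unfolding torus_box_def by blast
    thus ?thesis unfolding abs_le_iff by linarith
  qed
  show "torus_dist n 0 x = norm x" "torus_dist n x 0 = norm x"
    unfolding torus_dist_def norm_vec_def L2_set_def
    using circ_dist_box[OF assms(1) a] by simp_all
qed

lemma torus_dist_measurable1:
  assumes "n > 0"
  shows "(\<lambda>x::real^'d. torus_dist n 0 x) \<in> borel_measurable borel"
proof -
  have "(\<lambda>x::real^'d. sqrt (\<Sum>i\<in>UNIV. \<bar>(0 - x$i) - real_of_int (round ((0 - x$i)/ real n)) * real n\<bar>^2)) \<in> borel_measurable borel"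
    by measurable
  thus ?thesis unfolding torus_dist_def circ_dist_closed[OF assms] by simp
qed

lemma torus_dist_measurable2:
  assumes "n > 0"
  shows "(\<lambda>x::real^'d. torus_dist n x 0) \<in> borel_measurable borel"
proof -
  have "(\<lambda>x::real^'d. sqrt (\<Sum>i\<in>UNIV. \<bar>(x$i - 0) - real_of_int (round ((x$i - 0)/ real n)) * real n\<bar>^2)) \<in> borel_measurable borel"
    by measurable
  thus ?thesis unfolding torus_dist_def circ_dist_closed[OF assms] by simp
qed

lemma emeasure_torus_box:
  "emeasure lborel (torus_box n :: (real^'d) set) = ennreal (real n ^ CARD('d))"
proof -
  let ?a = "vec (- (real n / 2)) :: real^'d" and ?b = "vec (real n / 2) :: real^'d"
  have sub1: "box ?a ?b \<subseteq> torus_box n"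
  proof
    fix x :: "real^'d" assume "x \<in> box ?a ?b"
    hence "\<forall>i. - (real n / 2) < x $ i \<and> x $ i < real n / 2" by (simp add: mem_box_cart)
    thus "x \<in> torus_box n" unfolding torus_box_def by (auto intro: less_imp_le)
  qed
  have sub2: "torus_box n \<subseteq> cbox ?a ?b"
  proof
    fix x :: "real^'d" assume "x \<in> torus_box n"
    hence "\<forall>i. - (real n / 2) \<le> x $ i \<and> x $ i < real n / 2" by (simp add: torus_box_def)
    thus "x \<in> cbox ?a ?b" by (auto simp: mem_box_cart intro: less_imp_le)
  qed
  have ne: "cbox ?a ?b \<noteq> {}" by (auto simp: box_ne_empty(1) mem_box_cart intro!: exI[of _ 0])
  have e1: "emeasure lborel (cbox ?a ?b) = ennreal (real n ^ CARD('d))"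
  proof -
    have "emeasure lborel (cbox ?a ?b) = ennreal (Henstock_Kurzweil_Integration.content (cbox ?a ?b))"
      using emeasure_lborel_cbox_finite[of ?a ?b] by (simp add: emeasure_eq_ennreal_measure)
    also have "Henstock_Kurzweil_Integration.content (cbox ?a ?b) = real n ^ CARD('d)"
      by (simp add: content_cbox_cart[OF ne])
    finally show ?thesis .
  qed
  have e2: "emeasure lborel (box ?a ?b) = emeasure lborel (cbox ?a ?b)"
    by (simp only: emeasure_lborel_box_eq emeasure_lborel_cbox_eq)
  have m: "torus_box n \<in> sets (lborel :: (real^'d) measure)" unfolding torus_box_def by measurable
  show ?thesis
  proof (rule antisym)
    show "emeasure lborel (torus_box n :: (real^'d) set) \<le> ennreal (real n ^ CARD('d))"
      using emeasure_mono[OF sub2, of lborel] e1 by simp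
    show "ennreal (real n ^ CARD('d)) \<le> emeasure lborel (torus_box n :: (real^'d) set)"
      using emeasure_mono[OF sub1 m] e1 e2 by simp
  qed
qed



lemma tail_bound:
  fixes \<mu> :: "real measure"
  assumes "((\<lambda>h. h powr s * measure \<mu> {h<..}) \<longlongrightarrow> \<beta>) at_top"
  obtains h0 where "h0 \<ge> 1" "\<And>h. h \<ge> h0 \<Longrightarrow> measure \<mu> {h<..} \<le> (\<beta> + 1) * h powr (- s)"
proof -
  have "eventually (\<lambda>h. h powr s * measure \<mu> {h<..} < \<beta> + 1) at_top"
    using order_tendstoD(2)[OF assms] by simp
  then obtain h1 where h1: "\<And>h. h \<ge> h1 \<Longrightarrow> h powr s * measure \<mu> {h<..} < \<beta> + 1"
    by (auto simp: eventually_at_top_linorder)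
  show ?thesis
  proof (rule that[of "max h1 1"])
    fix h assume h: "h \<ge> max h1 1"
    hence hp: "h > 0" by simp
    have "h powr s * measure \<mu> {h<..} \<le> \<beta> + 1" using h1[of h] h by simp
    hence "measure \<mu> {h<..} \<le> (\<beta> + 1) / h powr s" using hp by (simp add: field_simps)
    thus "measure \<mu> {h<..} \<le> (\<beta> + 1) * h powr (- s)" using hp by (simp add: powr_minus divide_inverse)
  qed simp
qed

lemma find_dyadic:
  fixes t h0 :: real
  assumes "h0 > 0" "t > h0"
  obtains j :: nat where "2^j * h0 < t" "t \<le> 2^(Suc j) * h0"
proof -
  obtain N :: nat where N: "t / h0 < real N" using reals_Archimedean2 by blast
  have "N < 2^N" by (rule less_exp)
  hence "real N < real (2^N)" by (simp only: of_nat_less_iff)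
  hence "real N < 2 ^ N" by simp
  have "t < h0 * real N" using N assms(1) by (simp add: field_simps)
  also have "h0 * real N < h0 * 2^N" using \<open>real N < 2 ^ N\<close> assms(1) by simp
  finally have tN: "t < 2^N * h0" by (simp add: mult.commute)
  define S where "S = {j::nat. 2^j * h0 < t}"
  have fin: "finite S"
  proof (rule finite_subset[of _ "{..<N}"])
    show "S \<subseteq> {..<N}"
    proof
      fix j assume "j \<in> S"
      hence "2^j * h0 < 2^N * h0" using tN unfolding S_def by simp
      hence "(2::real)^j < 2^N" using assms(1) by simp
      thus "j \<in> {..<N}" by simp
    qed
  qed simp
  have "0 \<in> S" using assms unfolding S_def by simp
  define j where "j = Max S"
  have jS: "j \<in> S" using fin \<open>0 \<in> S\<close> unfolding j_def by (intro Max_in) auto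
  have "Suc j \<notin> S"
  proof
    assume "Suc j \<in> S"
    hence "Suc j \<le> j" unfolding j_def by (rule Max_ge[OF fin])
    thus False by simp
  qed
  thus ?thesis using jS unfolding S_def by (intro that[of j]) auto
qed

lemma powr_alg:
  fixes h0 B s D :: real and j :: nat
  assumes "h0 > 0"
  shows "(2^(Suc j) * h0) powr D * (B * (2^j * h0) powr (- s))
     = (B * 2 powr D * h0 powr (D - s)) * (2 powr (D - s))^j"
proof -
  have x: "(2::real)^j = 2 powr (real j)" by (simp add: powr_realpow)
  have "(2^(Suc j) * h0) powr D = 2 powr D * (2 powr real j) powr D * h0 powr D"
    using assms by (simp add: powr_mult x)
  moreover have "(2^j * h0) powr (- s) = (2 powr real j) powr (-s) * h0 powr (-s)"
    using assms by (simp add: powr_mult x)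
  moreover have "(2 powr (D - s))^j = (2 powr real j) powr (D - s)"
    by (simp add: powr_powr powr_realpow[symmetric] mult.commute)
  moreover have "(2 powr real j) powr D * (2 powr real j) powr (-s) = (2 powr real j) powr (D - s)"
    by (simp add: powr_add[symmetric])
  moreover have "h0 powr D * h0 powr (-s) = h0 powr (D - s)"
    by (simp add: powr_add[symmetric])
  ultimately show ?thesis by (simp add: algebra_simps)
qed

lemma moment_finite:
  fixes \<mu> :: "real measure" and D :: nat
  assumes ps: "prob_space \<mu>" and sets: "sets \<mu> = sets borel"
    and neg: "emeasure \<mu> {..<0} = 0"
    and tail: "((\<lambda>h. h powr s * measure \<mu> {h<..}) \<longlongrightarrow> \<beta>) at_top"
    and Ds: "real D < s" and bp: "\<beta> > 0"
  shows "(\<integral>\<^sup>+t. ennreal (\<bar>t\<bar>^D) \<partial>\<mu>) < \<infinity>"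
proof -
  interpret prob_space \<mu> by (rule ps)
  obtain h0 where h0: "h0 \<ge> 1" and hb: "\<And>h. h \<ge> h0 \<Longrightarrow> measure \<mu> {h<..} \<le> (\<beta> + 1) * h powr (- s)"
    using tail_bound[OF tail] by blast
  have h0p: "h0 > 0" using h0 by simp
  define c where "c j = ((2::real)^(Suc j) * h0)^D" for j :: nat
  define F where "F t = ennreal (h0^D) + (\<Sum>j. ennreal (c j) * indicator {2^j*h0<..} t)" for t :: real
  have [measurable]: "{a<..} \<in> sets \<mu>" for a :: real using sets by simp
  have AEpos: "AE t in \<mu>. t \<ge> 0"
  proof (rule AE_I')
    show "{..<0} \<in> null_sets \<mu>" using neg sets by (simp add: null_sets_def)
    show "{t \<in> space \<mu>. \<not> 0 \<le> t} \<subseteq> {..<0}" by auto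
  qed
  have pw: "ennreal (\<bar>t\<bar>^D) \<le> F t" if t: "t \<ge> 0" for t
  proof (cases "t \<le> h0")
    case True
    have "\<bar>t\<bar>^D \<le> h0^D" using t True by (simp add: power_mono)
    hence "ennreal (\<bar>t\<bar>^D) \<le> ennreal (h0^D)" by (rule ennreal_leI)
    also have "\<dots> \<le> F t" unfolding F_def by simp
    finally show ?thesis .
  next
    case False
    then obtain j where j: "2^j * h0 < t" "t \<le> 2^(Suc j) * h0" using find_dyadic[OF h0p, of t] by auto
    have "\<bar>t\<bar>^D \<le> c j" unfolding c_def using t j(2) by (simp add: power_mono)
    hence "ennreal (\<bar>t\<bar>^D) \<le> ennreal (c j) * indicator {2^j*h0<..} t" using j(1) by (simp add: ennreal_leI)
    also have "\<dots> = (\<Sum>i\<in>{j}. ennreal (c i) * indicator {2^i*h0<..} t)" by (subst sum.insert) simp_all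
    also have "\<dots> \<le> (\<Sum>i. ennreal (c i) * indicator {2^i*h0<..} t)"
      by (rule sum_le_suminf) auto
    also have "\<dots> \<le> F t" unfolding F_def by simp
    finally show ?thesis .
  qed
  have "(\<integral>\<^sup>+t. ennreal (\<bar>t\<bar>^D) \<partial>\<mu>) \<le> (\<integral>\<^sup>+t. F t \<partial>\<mu>)"
    by (rule nn_integral_mono_AE) (use AEpos pw in auto)
  also have "(\<integral>\<^sup>+t. F t \<partial>\<mu>) = ennreal (h0^D) + (\<Sum>j. ennreal (c j) * emeasure \<mu> {2^j*h0<..})"
  proof -
    have "(\<integral>\<^sup>+t. F t \<partial>\<mu>) = (\<integral>\<^sup>+t. ennreal (h0^D) \<partial>\<mu>) + (\<integral>\<^sup>+t. (\<Sum>j. ennreal (c j) * indicator {2^j*h0<..} t) \<partial>\<mu>)"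
      unfolding F_def by (rule nn_integral_add) auto
    also have "(\<integral>\<^sup>+t. ennreal (h0^D) \<partial>\<mu>) = ennreal (h0^D)"
      by (simp add: emeasure_space_1)
    also have "(\<integral>\<^sup>+t. (\<Sum>j. ennreal (c j) * indicator {2^j*h0<..} t) \<partial>\<mu>) = (\<Sum>j. \<integral>\<^sup>+t. ennreal (c j) * indicator {2^j*h0<..} t \<partial>\<mu>)"
      by (rule nn_integral_suminf) auto
    also have "\<dots> = (\<Sum>j. ennreal (c j) * emeasure \<mu> {2^j*h0<..})"
      by (simp add: nn_integral_cmult_indicator)
    finally show ?thesis .
  qed
  also have "(\<Sum>j. ennreal (c j) * emeasure \<mu> {2^j*h0<..}) \<le> (\<Sum>j. ennreal (((\<beta> + 1) * 2 powr D * h0 powr (D - s)) * (2 powr (D - s))^j))"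
  proof (rule suminf_le)
    fix j
    have le1: "(2::real)^j * h0 \<ge> h0" using h0p by simp
    have e: "ennreal (c j) * emeasure \<mu> {2^j*h0<..} = ennreal (c j * measure \<mu> {2^j*h0<..})"
      by (simp add: emeasure_eq_measure ennreal_mult'')
    have "c j * measure \<mu> {2^j*h0<..} \<le> c j * ((\<beta> + 1) * (2^j*h0) powr (- s))"
      unfolding c_def by (rule mult_left_mono[OF hb[OF le1]]) (use h0p in simp)
    also have "c j * ((\<beta> + 1) * (2^j*h0) powr (- s)) = ((\<beta> + 1) * 2 powr D * h0 powr (D - s)) * (2 powr (D - s))^j"
    proof -
      have cj: "c j = (2^(Suc j) * h0) powr D" unfolding c_def using h0p by (simp add: powr_realpow)
      show ?thesis unfolding cj by (rule powr_alg[OF h0p])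
    qed
    finally have r: "c j * measure \<mu> {2^j*h0<..} \<le> ((\<beta> + 1) * 2 powr D * h0 powr (D - s)) * (2 powr (D - s))^j" .
    show "ennreal (c j) * emeasure \<mu> {2^j*h0<..} \<le> ennreal (((\<beta> + 1) * 2 powr D * h0 powr (D - s)) * (2 powr (D - s))^j)"
      unfolding e by (rule ennreal_leI[OF r])
  qed auto
  also have "\<dots> = ennreal (\<Sum>j. ((\<beta> + 1) * 2 powr D * h0 powr (D - s)) * (2 powr (D - s))^j)"
  proof (rule suminf_ennreal2)
    show "summable (\<lambda>j. ((\<beta> + 1) * 2 powr D * h0 powr (D - s)) * (2 powr (D - s))^j)"
      by (rule summable_mult, rule summable_geometric) (use Ds powr_less_one[of 2 "D - s"] in simp)
    fix j
    show "0 \<le> ((\<beta> + 1) * 2 powr D * h0 powr (D - s)) * (2 powr (D - s))^j"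
      using bp h0p by (intro mult_nonneg_nonneg) auto
  qed
  finally have le: "(\<integral>\<^sup>+t. ennreal (\<bar>t\<bar>^D) \<partial>\<mu>) \<le> ennreal (h0^D) + ennreal (\<Sum>j. ((\<beta> + 1) * 2 powr D * h0 powr (D - s)) * (2 powr (D - s))^j)"
    by (auto intro: add_left_mono)
  show ?thesis by (rule le_less_trans[OF le]) (simp add: less_top[symmetric] ennreal_add_eq_top)
qed



definition Aset :: "nat \<Rightarrow> real \<Rightarrow> ((real^'d) \<times> real) set" where
  "Aset n r = {w. w = (0, r) \<or> (\<not> torus_dist n 0 (fst w) \<le> r \<and> \<not> torus_dist n (fst w) 0 \<le> snd w)}"

definition gfun :: "real measure \<Rightarrow> real \<Rightarrow> real^'d \<Rightarrow> ennreal" where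
  "gfun \<mu> r x = emeasure \<mu> {t. norm x \<le> r \<or> norm x \<le> t}"

definition Phi :: "'d::finite itself \<Rightarrow> real measure \<Rightarrow> nat \<Rightarrow> real \<Rightarrow> ennreal" where
  "Phi _ \<mu> n r = (\<integral>\<^sup>+x. gfun \<mu> r (x :: real^'d) * indicator (torus_box n) x \<partial>lborel)"

context
  fixes \<mu> :: "real measure"
  assumes ps: "prob_space \<mu>" and sets_mu: "sets \<mu> = sets borel"
begin

lemma space_mu: "space \<mu> = UNIV"
  using sets_eq_imp_space_eq[OF sets_mu] by simp

lemma space_mp: "space (marked_point n \<mu> :: ((real^'d) \<times> real) measure) = UNIV"
  unfolding marked_point_def by (simp add: space_pair_measure space_mu)

lemma sets_mp: "sets (marked_point n \<mu> :: ((real^'d) \<times> real) measure) = sets (borel \<Otimes>\<^sub>M borel)"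
  unfolding marked_point_def by (rule sets_pair_measure_cong) (simp_all add: sets_mu)

lemma prob_unif:
  assumes "n > 0"
  shows "prob_space (uniform_measure lborel (torus_box n :: (real^'d) set))"
  by (rule prob_space_uniform_measure) (use assms in \<open>simp_all add: emeasure_torus_box\<close>)

lemma prob_mp:
  assumes "n > 0"
  shows "prob_space (marked_point n \<mu> :: ((real^'d) \<times> real) measure)"
  unfolding marked_point_def by (rule prob_space_pair[OF prob_unif[OF assms] ps])

lemma Aset_sets:
  assumes n: "n > 0"
  shows "(Aset n r :: ((real^'d) \<times> real) set) \<in> sets (marked_point n \<mu>)"
proof -
  note [measurable] = torus_dist_measurable1[OF n] torus_dist_measurable2[OF n]
  have "{w \<in> space (borel \<Otimes>\<^sub>M borel). \<not> torus_dist n 0 (fst w) \<le> r \<and> \<not> torus_dist n (fst (w :: (real^'d) \<times> real)) 0 \<le> snd w} \<in> sets (borel \<Otimes>\<^sub>M borel)"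
    by measurable
  hence "{w::(real^'d) \<times> real. \<not> torus_dist n 0 (fst w) \<le> r \<and> \<not> torus_dist n (fst w) 0 \<le> snd w} \<in> sets (borel \<Otimes>\<^sub>M borel)"
    by (simp add: space_pair_measure)
  moreover have "{0::real^'d} \<times> {r} \<in> sets (borel \<Otimes>\<^sub>M borel)"
    by (intro pair_measureI) auto
  hence "{(0::real^'d, r)} \<in> sets (borel \<Otimes>\<^sub>M borel)" by simp
  ultimately have "{(0::real^'d, r)} \<union> {w::(real^'d) \<times> real. \<not> torus_dist n 0 (fst w) \<le> r \<and> \<not> torus_dist n (fst w) 0 \<le> snd w} \<in> sets (borel \<Otimes>\<^sub>M borel)"
    by blast
  moreover have "Aset n r = {(0::real^'d, r)} \<union> {w::(real^'d) \<times> real. \<not> torus_dist n 0 (fst w) \<le> r \<and> \<not> torus_dist n (fst w) 0 \<le> snd w}"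
    unfolding Aset_def by auto
  ultimately show ?thesis by (simp add: sets_mp)
qed

lemma iso_iff:
  "isolated n (S \<union> {(0, r)}) (0, r) \<longleftrightarrow> (\<forall>w\<in>S. w \<in> Aset n r)"
proof
  assume h: "isolated n (S \<union> {(0, r)}) (0, r)"
  show "\<forall>w\<in>S. w \<in> Aset n r"
  proof
    fix w assume w: "w \<in> S"
    show "w \<in> Aset n r"
    proof (cases "w = (0, r)")
      case False
      have "\<not> edge n (S \<union> {(0, r)}) (0, r) w" "\<not> edge n (S \<union> {(0, r)}) w (0, r)"
        using h unfolding isolated_def by blast+
      thus ?thesis using False w unfolding edge_def Aset_def by auto
    qed (simp add: Aset_def)
  qed
next
  assume h: "\<forall>w\<in>S. w \<in> Aset n r"
  show "isolated n (S \<union> {(0, r)}) (0, r)"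
    unfolding isolated_def
  proof (intro conjI allI)
    fix w
    show "\<not> edge n (S \<union> {(0, r)}) (0, r) w"
    proof
      assume e: "edge n (S \<union> {(0, r)}) (0, r) w"
      hence "w \<in> S" "w \<noteq> (0, r)" unfolding edge_def by auto
      thus False using h e unfolding edge_def Aset_def by auto
    qed
    show "\<not> edge n (S \<union> {(0, r)}) w (0, r)"
    proof
      assume e: "edge n (S \<union> {(0, r)}) w (0, r)"
      hence "w \<in> S" "w \<noteq> (0, r)" unfolding edge_def by auto
      thus False using h e unfolding edge_def Aset_def by auto
    qed
  qed simp
qed

lemma event_eq:
  "{f \<in> space (PiM {..<k} (\<lambda>_. marked_point n \<mu> :: ((real^'d) \<times> real) measure)).
      isolated n (f ` {..<k} \<union> {(0, r)}) (0, r)} = PiE {..<k} (\<lambda>_. Aset n r)"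
  unfolding space_PiM space_mp iso_iff by (auto simp: PiE_iff extensional_def)

lemma measure_event:
  assumes n: "n > 0"
  shows "measure (PiM {..<k} (\<lambda>_. marked_point n \<mu> :: ((real^'d) \<times> real) measure)) (PiE {..<k} (\<lambda>_. Aset n r))
     = (measure (marked_point n \<mu>) (Aset n r :: ((real^'d) \<times> real) set)) ^ k"
proof -
  interpret P: prob_space "marked_point n \<mu> :: ((real^'d) \<times> real) measure" by (rule prob_mp[OF n])
  have psf: "product_sigma_finite (\<lambda>_::nat. marked_point n \<mu> :: ((real^'d) \<times> real) measure)"
    by unfold_locales
  have "emeasure (PiM {..<k} (\<lambda>_. marked_point n \<mu> :: ((real^'d) \<times> real) measure)) (PiE {..<k} (\<lambda>_. Aset n r))
     = (\<Prod>i\<in>{..<k}. emeasure (marked_point n \<mu>) (Aset n r :: ((real^'d) \<times> real) set))"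
    by (rule product_sigma_finite.emeasure_PiM[OF psf]) (auto intro: Aset_sets[OF n])
  also have "\<dots> = ennreal ((measure (marked_point n \<mu>) (Aset n r :: ((real^'d) \<times> real) set)) ^ k)"
    by (simp add: P.emeasure_eq_measure prod_ennreal ennreal_power)
  finally show ?thesis by (simp add: measure_def)
qed

lemma Phi_le:
  "Phi TYPE('d) \<mu> n r \<le> ennreal (real n ^ CARD('d::finite))"
proof -
  interpret prob_space \<mu> by (rule ps)
  have m: "torus_box n \<in> sets (lborel :: (real^'d) measure)" unfolding torus_box_def by measurable
  have "Phi TYPE('d) \<mu> n r \<le> (\<integral>\<^sup>+x. indicator (torus_box n) (x::real^'d) \<partial>lborel)"
    unfolding Phi_def gfun_def
    by (rule nn_integral_mono) (auto simp: indicator_def emeasure_le_1)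
  also have "\<dots> = ennreal (real n ^ CARD('d))" using m by (simp add: emeasure_torus_box)
  finally show ?thesis .
qed

lemma compl_measure:
  assumes n: "n > 0"
  shows "real n ^ CARD('d) * (1 - measure (marked_point n \<mu>) (Aset n r :: ((real^'d::finite) \<times> real) set))
           = enn2real (Phi TYPE('d) \<mu> n r)"
proof -
  interpret M: prob_space \<mu> by (rule ps)
  let ?U = "uniform_measure lborel (torus_box n :: (real^'d) set)"
  let ?MP = "marked_point n \<mu> :: ((real^'d) \<times> real) measure"
  let ?C = "UNIV - (Aset n r :: ((real^'d) \<times> real) set)"
  let ?lam = "real n ^ CARD('d)"
  interpret P: prob_space ?MP by (rule prob_mp[OF n])
  have lp: "?lam > 0" using n by simp
  have mbox: "torus_box n \<in> sets (lborel :: (real^'d) measure)" unfolding torus_box_def by measurable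
  have Cs: "?C \<in> sets ?MP" using sets.compl_sets[OF Aset_sets[OF n]] by (simp add: space_mp)
  have pc: "measure ?MP ?C = 1 - measure ?MP (Aset n r)"
    using P.prob_compl[OF Aset_sets[OF n]] by (simp add: space_mp)
  have Cs': "?C \<in> sets (?U \<Otimes>\<^sub>M \<mu>)" using Cs unfolding marked_point_def .
  have e1: "emeasure ?MP ?C = (\<integral>\<^sup>+x. emeasure \<mu> (Pair x -` ?C) \<partial>?U)"
    unfolding marked_point_def by (rule M.emeasure_pair_measure_alt[OF Cs'])
  have meas: "(\<lambda>x. emeasure \<mu> (Pair x -` ?C)) \<in> borel_measurable lborel"
  proof -
    have sU: "sets ?U = sets lborel" by simp
    show ?thesis using M.measurable_emeasure_Pair[OF Cs'] unfolding measurable_cong_sets[OF sU refl] .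
  qed
  have e2: "(\<integral>\<^sup>+x. emeasure \<mu> (Pair x -` ?C) \<partial>?U)
      = (\<integral>\<^sup>+x. emeasure \<mu> (Pair x -` ?C) * indicator (torus_box n) x \<partial>lborel) / emeasure lborel (torus_box n :: (real^'d) set)"
    by (rule nn_integral_uniform_measure[OF meas mbox])
  have e3: "(\<integral>\<^sup>+x. emeasure \<mu> (Pair x -` ?C) * indicator (torus_box n) x \<partial>lborel) = Phi TYPE('d) \<mu> n r"
    unfolding Phi_def
  proof (rule nn_integral_cong_AE)
    show "AE x in lborel. emeasure \<mu> (Pair x -` ?C) * indicator (torus_box n) x = gfun \<mu> r x * indicator (torus_box n) x"
      using AE_lborel_singleton[of "0::real^'d"]
    proof eventually_elim
      case (elim x)
      show ?case
      proof (cases "x \<in> torus_box n")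
        case True
        have "Pair x -` ?C = {t. norm x \<le> r \<or> norm x \<le> t}"
          using elim torus_dist_box[OF n True] unfolding Aset_def by auto
        thus ?thesis unfolding gfun_def by simp
      qed simp
    qed
  qed
  have Pf: "Phi TYPE('d) \<mu> n r = ennreal (enn2real (Phi TYPE('d) \<mu> n r))"
  proof -
    have "Phi TYPE('d) \<mu> n r \<noteq> \<top>"
      using Phi_le[of n r, where 'd='d] by (auto simp: top_unique)
    thus ?thesis by (simp add: ennreal_enn2real_if)
  qed
  have "emeasure ?MP ?C = ennreal (enn2real (Phi TYPE('d) \<mu> n r) / ?lam)"
    unfolding e1 e2 e3 emeasure_torus_box using lp
    by (subst Pf) (simp add: divide_ennreal)
  hence "measure ?MP ?C = enn2real (Phi TYPE('d) \<mu> n r) / ?lam"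
    by (simp add: measure_def)
  thus ?thesis using pc lp by (simp add: field_simps)
qed

lemma ppp_formula:
  assumes n: "n > 0"
  shows "ppp_prob TYPE('d::finite) n \<mu> (\<lambda>\<phi>. isolated n (\<phi> \<union> {(0::real^'d, r)}) (0, r))
       = exp (- enn2real (Phi TYPE('d) \<mu> n r))"
proof -
  let ?p = "measure (marked_point n \<mu>) (Aset n r :: ((real^'d) \<times> real) set)"
  let ?lam = "real n ^ CARD('d)"
  have tm: "exp (- ?lam) * ?lam ^ k / fact k *
        measure (PiM {..<k} (\<lambda>_. marked_point n \<mu> :: ((real^'d) \<times> real) measure))
          {f \<in> space (PiM {..<k} (\<lambda>_. marked_point n \<mu> :: ((real^'d) \<times> real) measure)).
             isolated n (f ` {..<k} \<union> {(0::real^'d, r)}) (0, r)}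
      = exp (- ?lam) * ((?lam * ?p) ^ k /\<^sub>R fact k)" for k
    unfolding event_eq measure_event[OF n] by (simp add: power_mult_distrib field_simps)
  have "(\<lambda>k. exp (- ?lam) * ((?lam * ?p) ^ k /\<^sub>R fact k)) sums (exp (- ?lam) * exp (?lam * ?p))"
    by (rule sums_mult[OF exp_converges])
  hence "ppp_prob TYPE('d::finite) n \<mu> (\<lambda>\<phi>. isolated n (\<phi> \<union> {(0::real^'d, r)}) (0, r))
       = exp (- ?lam) * exp (?lam * ?p)"
    unfolding ppp_prob_def tm by (rule sums_unique[symmetric])
  also have "\<dots> = exp (- (?lam * (1 - ?p)))" by (simp add: exp_add[symmetric] algebra_simps)
  also have "?lam * (1 - ?p) = enn2real (Phi TYPE('d) \<mu> n r)" by (rule compl_measure[OF n])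
  finally show ?thesis .
qed

lemma gset_sets: "{t. norm (x::real^'d::finite) \<le> r \<or> norm x \<le> t} \<in> sets \<mu>"
proof -
  have "{t \<in> space borel. norm x \<le> r \<or> norm x \<le> t} \<in> sets borel" by measurable
  thus ?thesis by (simp add: sets_mu)
qed

lemma Phi_mono_n: "Phi TYPE('d::finite) \<mu> n r \<le> Phi TYPE('d) \<mu> (Suc n) r"
proof -
  have "torus_box n \<subseteq> (torus_box (Suc n) :: (real^'d) set)"
    unfolding torus_box_def by (auto simp: field_simps) (smt (verit, ccfv_SIG) of_nat_0_le_iff)+
  thus ?thesis unfolding Phi_def
    by (intro nn_integral_mono) (auto simp: indicator_def)
qed

lemma Phi_mono_r: "r \<le> r' \<Longrightarrow> Phi TYPE('d::finite) \<mu> n r \<le> Phi TYPE('d) \<mu> n r'"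
  unfolding Phi_def gfun_def
  by (intro nn_integral_mono mult_right_mono emeasure_mono gset_sets) auto

lemma Phi_fin: "Phi TYPE('d::finite) \<mu> n r < \<top>"
  using Phi_le[of n r, where 'd='d] by (simp add: le_less_trans)

lemma G_mono_n: "enn2real (Phi TYPE('d::finite) \<mu> n r) \<le> enn2real (Phi TYPE('d) \<mu> (Suc n) r)"
  by (rule enn2real_mono[OF Phi_mono_n Phi_fin])

lemma G_mono_r: "mono (\<lambda>r. enn2real (Phi TYPE('d::finite) \<mu> n r))"
  by (rule monoI, rule enn2real_mono[OF Phi_mono_r Phi_fin])

lemma Phi_bound:
  assumes mom: "(\<integral>\<^sup>+t. ennreal (\<bar>t\<bar>^CARD('d::finite)) \<partial>\<mu>) < \<infinity>"
  obtains m :: real where "\<And>n r. enn2real (Phi TYPE('d) \<mu> n r) \<le> unit_ball_vol (real CARD('d)) * \<bar>r\<bar>^CARD('d) + m"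
proof -
  interpret M: prob_space \<mu> by (rule ps)
  interpret PS: pair_sigma_finite "lborel :: (real^'d) measure" \<mu> by unfold_locales
  let ?S = "{p :: (real^'d) \<times> real. norm (fst p) \<le> snd p}"
  let ?h = "\<lambda>x::real^'d. emeasure \<mu> {t. norm x \<le> t}"
  let ?M1 = "\<integral>\<^sup>+x. ?h x \<partial>lborel"
  have S1: "{p \<in> space (borel \<Otimes>\<^sub>M borel). norm (fst (p :: (real^'d) \<times> real)) \<le> snd p} \<in> sets (borel \<Otimes>\<^sub>M borel)"
    by measurable
  have sS: "sets (lborel \<Otimes>\<^sub>M \<mu>) = sets (borel \<Otimes>\<^sub>M (borel :: real measure))"
    by (rule sets_pair_measure_cong) (simp_all add: sets_mu)
  have S: "?S \<in> sets (lborel \<Otimes>\<^sub>M \<mu>)" using S1 unfolding sS by (simp add: space_pair_measure)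
  have hm: "?h \<in> borel_measurable lborel"
    using M.measurable_emeasure_Pair[OF S] by (simp add: vimage_def)
  have "?M1 = emeasure (lborel \<Otimes>\<^sub>M \<mu>) ?S"
    using M.emeasure_pair_measure_alt[OF S] by (simp add: vimage_def)
  also have "\<dots> = (\<integral>\<^sup>+t. emeasure lborel ((\<lambda>x. (x, t)) -` ?S) \<partial>\<mu>)"
    by (rule PS.emeasure_pair_measure_alt2[OF S])
  also have "\<dots> \<le> (\<integral>\<^sup>+t. ennreal (unit_ball_vol (real CARD('d))) * ennreal (\<bar>t\<bar>^CARD('d)) \<partial>\<mu>)"
  proof (rule nn_integral_mono)
    fix t
    have eq: "(\<lambda>x. (x, t)) -` ?S = cball (0::real^'d) t" by (auto simp: dist_norm)
    show "emeasure lborel ((\<lambda>x. (x, t)) -` ?S) \<le> ennreal (unit_ball_vol (real CARD('d))) * ennreal (\<bar>t\<bar>^CARD('d))"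
    proof (cases "t \<ge> 0")
      case True
      thus ?thesis unfolding eq using emeasure_cball[OF True, of "0::real^'d"]
        by (simp add: ennreal_mult)
    next
      case False
      thus ?thesis unfolding eq by simp
    qed
  qed
  also have "\<dots> = ennreal (unit_ball_vol (real CARD('d))) * (\<integral>\<^sup>+t. ennreal (\<bar>t\<bar>^CARD('d)) \<partial>\<mu>)"
  proof (rule nn_integral_cmult)
    have "(\<lambda>t::real. ennreal (\<bar>t\<bar>^CARD('d))) \<in> borel_measurable borel" by measurable
    thus "(\<lambda>t::real. ennreal (\<bar>t\<bar>^CARD('d))) \<in> borel_measurable \<mu>"
      by (simp add: measurable_cong_sets[OF sets_mu refl])
  qed
  also have "\<dots> < \<infinity>" using mom by (simp add: ennreal_mult_less_top)
  finally have M1f: "?M1 < \<infinity>" .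
  define m where "m = enn2real ?M1"
  have M1e: "?M1 = ennreal m" unfolding m_def using M1f by simp
  show ?thesis
  proof (rule that[of m])
    fix n r
    have "Phi TYPE('d) \<mu> n r \<le> (\<integral>\<^sup>+x. indicator (cball 0 \<bar>r\<bar>) x + ?h x \<partial>lborel)"
      unfolding Phi_def
    proof (rule nn_integral_mono)
      fix x :: "real^'d"
      have "gfun \<mu> r x \<le> indicator (cball 0 \<bar>r\<bar>) x + ?h x"
      proof (cases "norm x \<le> r")
        case True
        hence "gfun \<mu> r x \<le> 1" unfolding gfun_def by (simp add: M.emeasure_le_1)
        also have "1 = indicator (cball 0 \<bar>r\<bar>) x" using True by (simp add: indicator_def)
        finally show ?thesis by (simp add: add_increasing2)
      next
        case False
        hence "gfun \<mu> r x = ?h x" unfolding gfun_def by simp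
        thus ?thesis by simp
      qed
      thus "gfun \<mu> r x * indicator (torus_box n) x \<le> indicator (cball 0 \<bar>r\<bar>) x + ?h x"
        by (rule order_trans[rotated]) (simp add: indicator_def)
    qed
    also have "\<dots> = (\<integral>\<^sup>+x. indicator (cball (0::real^'d) \<bar>r\<bar>) x \<partial>lborel) + ?M1"
    proof (rule nn_integral_add)
      show "indicator (cball (0::real^'d) \<bar>r\<bar>) \<in> borel_measurable lborel"
        by (rule borel_measurable_indicator) (simp add: borel_closed)
    qed (use hm in auto)
    also have "(\<integral>\<^sup>+x. indicator (cball (0::real^'d) \<bar>r\<bar>) x \<partial>lborel) + ?M1 = emeasure lborel (cball (0::real^'d) \<bar>r\<bar>) + ?M1"
      by (subst nn_integral_indicator) (simp_all add: borel_closed)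
    also have "\<dots> = ennreal (unit_ball_vol (real CARD('d)) * \<bar>r\<bar>^CARD('d) + m)"
    proof -
      have "m \<ge> 0" unfolding m_def by simp
      moreover have "unit_ball_vol (real CARD('d)) * \<bar>r\<bar>^CARD('d) \<ge> 0" by simp
      ultimately show ?thesis unfolding M1e by (subst emeasure_cball) (simp_all add: ennreal_plus)
    qed
    finally have "Phi TYPE('d) \<mu> n r \<le> ennreal (unit_ball_vol (real CARD('d)) * \<bar>r\<bar>^CARD('d) + m)" .
    hence "enn2real (Phi TYPE('d) \<mu> n r) \<le> enn2real (ennreal (unit_ball_vol (real CARD('d)) * \<bar>r\<bar>^CARD('d) + m))"
      by (rule enn2real_mono) simp
    also have "\<dots> = unit_ball_vol (real CARD('d)) * \<bar>r\<bar>^CARD('d) + m"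
      by (rule enn2real_ennreal) (simp add: m_def)
    finally show "enn2real (Phi TYPE('d) \<mu> n r) \<le> unit_ball_vol (real CARD('d)) * \<bar>r\<bar>^CARD('d) + m" .
  qed
qed

end

theorem proposition4p1:
  fixes \<mu> :: "real measure" and \<beta> s :: real
  assumes "CARD('d::finite) \<ge> 2"
    and "prob_space \<mu>" and "sets \<mu> = sets borel"
    and "emeasure \<mu> {..<0} = 0"
    and "absolutely_continuous lborel \<mu>"
    and "\<beta> > 0" and "s > 0"
    and "((\<lambda>h. h powr s * measure \<mu> {h<..}) \<longlongrightarrow> \<beta>) at_top"
    and "s > real CARD('d)"
  shows "\<exists>L. (\<lambda>n. iso_prob TYPE('d) n \<mu>) \<longlonglongrightarrow> L \<and> L > 0"
proof -
  note ps = assms(2) and sets = assms(3)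
  interpret M: prob_space \<mu> by (rule ps)
  have mom: "(\<integral>\<^sup>+t. ennreal (\<bar>t\<bar>^CARD('d)) \<partial>\<mu>) < \<infinity>"
    by (rule moment_finite[OF assms(2) assms(3) assms(4) assms(8) assms(9) assms(6)])
  define G where "G n r = enn2real (Phi TYPE('d) \<mu> n r)" for n r
  obtain m where mb: "\<And>n r. G n r \<le> unit_ball_vol (real CARD('d)) * \<bar>r\<bar>^CARD('d) + m"
    using Phi_bound[OF ps sets mom] unfolding G_def by blast
  define K where "K r = unit_ball_vol (real CARD('d)) * \<bar>r\<bar>^CARD('d) + m" for r :: real
  have mcong: "measurable \<mu> (borel :: real measure) = measurable borel borel"
    by (rule measurable_cong_sets[OF sets refl])
  have Gm: "(\<lambda>r. exp (- G n r)) \<in> borel_measurable \<mu>" for n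
  proof -
    have [measurable]: "(\<lambda>r. G n r) \<in> borel_measurable borel"
      unfolding G_def by (rule borel_measurable_mono[OF G_mono_r[OF ps sets]])
    have "(\<lambda>r. exp (- G n r)) \<in> borel_measurable borel" by measurable
    thus ?thesis unfolding mcong .
  qed
  have G0: "G n r \<ge> 0" for n r unfolding G_def by simp
  have Gi: "integrable \<mu> (\<lambda>r. exp (- G n r))" for n
    by (rule M.integrable_const_bound[where B=1]) (use G0 Gm in auto)
  have Km: "(\<lambda>r. exp (- K r)) \<in> borel_measurable \<mu>"
  proof -
    have "(\<lambda>r. exp (- K r)) \<in> borel_measurable borel" unfolding K_def by measurable
    thus ?thesis unfolding mcong .
  qed
  have K0: "K r \<ge> 0" for r using G0 mb unfolding K_def by (meson order_trans)
  have Ki: "integrable \<mu> (\<lambda>r. exp (- K r))"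
    by (rule M.integrable_const_bound[where B=1]) (use K0 Km in auto)
  have iso: "iso_prob TYPE('d) n \<mu> = (\<integral>r. exp (- G n r) \<partial>\<mu>)" if n: "n > 0" for n
    unfolding iso_prob_def G_def by (rule Bochner_Integration.integral_cong, rule refl, rule ppp_formula[OF ps sets n])
  define X where "X k = iso_prob TYPE('d) (Suc k) \<mu>" for k
  have Xe: "X k = (\<integral>r. exp (- G (Suc k) r) \<partial>\<mu>)" for k unfolding X_def by (rule iso) simp
  have dec: "decseq X"
    unfolding decseq_Suc_iff Xe
  proof
    fix k
    show "(\<integral>r. exp (- G (Suc (Suc k)) r) \<partial>\<mu>) \<le> (\<integral>r. exp (- G (Suc k) r) \<partial>\<mu>)"
      by (rule integral_mono[OF Gi Gi]) (simp add: G_def G_mono_n[OF ps sets])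
  qed
  define c where "c = (\<integral>r. exp (- K r) \<partial>\<mu>)"
  have ek: "exp (- K r) \<le> exp (- G n r)" for n r
  proof -
    have "G n r \<le> K r" using mb unfolding K_def .
    thus ?thesis by simp
  qed
  have cX: "c \<le> X k" for k
    unfolding c_def Xe by (rule integral_mono[OF Ki Gi ek])
  have c0: "c > 0"
  proof -
    have nn: "AE r in \<mu>. 0 \<le> exp (- K r)" by simp
    have "c \<ge> 0" unfolding c_def by (rule integral_nonneg_AE[OF nn])
    moreover have "c \<noteq> 0"
    proof
      assume "c = 0"
      hence "AE r in \<mu>. exp (- K r) = 0" unfolding c_def using integral_nonneg_eq_0_iff_AE[OF Ki nn] by simp
      hence "AE r in \<mu>. False" by simp
      thus False by (simp add: M.AE_False)
    qed
    ultimately show ?thesis by simp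
  qed
  obtain L where L: "X \<longlonglongrightarrow> L" "\<forall>i. L \<le> X i"
    using decseq_convergent[OF dec, of c] cX by blast
  have "c \<le> L" by (rule LIMSEQ_le_const[OF L(1)]) (use cX in auto)
  moreover have "(\<lambda>n. iso_prob TYPE('d) n \<mu>) \<longlonglongrightarrow> L"
    using L(1) unfolding X_def by (rule filterlim_sequentially_Suc[of "\<lambda>n. iso_prob TYPE('d) n \<mu>", THEN iffD1])
  ultimately show ?thesis using c0 by (intro exI[of _ L]) auto
qed


end
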